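(* Let $\Gamma=(G,\sigma)$, $G=(V,E)$, be a balanced signed graph, let $f:V\to\mathbb R$ be not identically zero, and let $\tau:V\to\{+1,-1\}$ be such that $\tau(x)\sigma_{xy}\tau(y)=+1$ for every edge $\{x,y\}\in E$. Then an induced subgraph of $G$ is a strong (respectively weak) nodal domain of $f$ on $\Gamma$ if and only if it is a strong (respectively weak) nodal domain, in the unsigned sense, of the function $\tau f$ ($(\tau f)(x)=\tau(x)f(x)$) on the graph $G$.
   Context: All graphs are finite, simple and undirected. A signed graph $\Gamma=(G,\sigma)$ is a graph $G=(V,E)$ with $\sigma:E\to\{+1,-1\}$; it is balanced if every cycle has positive sign (product of the signs of its edges). A walk is a sequence $y_1,\dots,y_m$ ($m\ge2$) with $y_j\sim y_{j+1}$. For $f:V\to\mathbb R$, $\Omega=\{x:f(x)\ne0\}$. An S-walk of $f$ is a walk with $f(y_j)\sigma_{y_jy_{j+1}}f(y_{j+1})>0$ for all $j$. A W-walk of $f$ is a walk such that for any two consecutive nonzeros $y_i,y_j$ ($i<j$, $f(y_l)=0$ for $i<l<j$) one has $f(y_i)\sigma_{y_iy_{i+1}}\cdots\sigma_{y_{j-1}y_j}f(y_j)>0$. On $\Omega$, $xR_Sy$ (resp. $xR_Wy$) iff $x=y$ or an S-walk (resp. W-walk) connects them. Strong nodal domains of $f$ on $\Gamma$: induced subgraphs on $R_S$-classes; weak nodal domains: for each $R_W$-class $W_i$, the induced subgraph on $W_i\cup\{x:\text{a W-walk joins } x \text{ to a vertex of } W_i\}$. Unsigned sense (for a graph $G$ and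 $g:V\to\mathbb R$): a positive (negative) strong nodal domain is a maximal connected induced subgraph on vertices with $g>0$ ($g<0$); a positive (negative) weak nodal domain is a maximal connected induced subgraph on vertices with $g\ge0$ ($g\le0$) containing at least one vertex where $g\ne0$. *)

theory Defs
  imports Complex_Main
begin

text \<open>Induced subgraphs are identified with
their vertex sets.\<close>

definition simple_graph :: "'a set \<Rightarrow> ('a \<Rightarrow> 'a \<Rightarrow> bool) \<Rightarrow> bool" where
  "simple_graph V E \<longleftrightarrow> finite V \<and> (\<forall>x y. E x y \<longrightarrow> x \<in> V \<and> y \<in> V)
     \<and> (\<forall>x y. E x y \<longrightarrow> E y x) \<and> (\<forall>x. \<not> E x x)"

definition signature :: "('a \<Rightarrow> 'a \<Rightarrow> bool) \<Rightarrow> ('a \<Rightarrow> 'a \<Rightarrow> real) \<Rightarrow> bool" where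
  "signature E \<sigma> \<longleftrightarrow> (\<forall>x y. E x y \<longrightarrow> \<sigma> x y = \<sigma> y x \<and> (\<sigma> x y = 1 \<or> \<sigma> x y = -1))"

definition walk :: "('a \<Rightarrow> 'a \<Rightarrow> bool) \<Rightarrow> 'a list \<Rightarrow> bool" where
  "walk E ys \<longleftrightarrow> length ys \<ge> 2 \<and> (\<forall>i. i + 1 < length ys \<longrightarrow> E (ys ! i) (ys ! (i + 1)))"

definition cycle :: "('a \<Rightarrow> 'a \<Rightarrow> bool) \<Rightarrow> 'a list \<Rightarrow> bool" where
  "cycle E cs \<longleftrightarrow> length cs \<ge> 3 \<and> distinct cs \<and> walk E cs \<and> E (last cs) (hd cs)"

definition cycle_sign :: "('a \<Rightarrow> 'a \<Rightarrow> real) \<Rightarrow> 'a list \<Rightarrow> real" where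
  "cycle_sign \<sigma> cs = (\<Prod>i<length cs - 1. \<sigma> (cs ! i) (cs ! (i + 1))) * \<sigma> (last cs) (hd cs)"

definition balanced :: "('a \<Rightarrow> 'a \<Rightarrow> bool) \<Rightarrow> ('a \<Rightarrow> 'a \<Rightarrow> real) \<Rightarrow> bool" where
  "balanced E \<sigma> \<longleftrightarrow> (\<forall>cs. cycle E cs \<longrightarrow> cycle_sign \<sigma> cs = 1)"

definition S_walk :: "('a \<Rightarrow> 'a \<Rightarrow> bool) \<Rightarrow> ('a \<Rightarrow> 'a \<Rightarrow> real) \<Rightarrow> ('a \<Rightarrow> real) \<Rightarrow> 'a list \<Rightarrow> bool" where
  "S_walk E \<sigma> f ys \<longleftrightarrow> walk E ys \<and>
     (\<forall>j. j + 1 < length ys \<longrightarrow> f (ys ! j) * \<sigma> (ys ! j) (ys ! (j + 1)) * f (ys ! (j + 1)) > 0)"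

definition W_walk :: "('a \<Rightarrow> 'a \<Rightarrow> bool) \<Rightarrow> ('a \<Rightarrow> 'a \<Rightarrow> real) \<Rightarrow> ('a \<Rightarrow> real) \<Rightarrow> 'a list \<Rightarrow> bool" where
  "W_walk E \<sigma> f ys \<longleftrightarrow> walk E ys \<and>
     (\<forall>i j. i < j \<and> j < length ys \<and> f (ys ! i) \<noteq> 0 \<and> f (ys ! j) \<noteq> 0
        \<and> (\<forall>l. i < l \<and> l < j \<longrightarrow> f (ys ! l) = 0) \<longrightarrow>
        f (ys ! i) * (\<Prod>l\<in>{i..<j}. \<sigma> (ys ! l) (ys ! (l + 1))) * f (ys ! j) > 0)"

definition nonzero_set :: "'a set \<Rightarrow> ('a \<Rightarrow> real) \<Rightarrow> 'a set" where
  "nonzero_set V f = {x \<in> V. f x \<noteq> 0}"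

definition R_S :: "'a set \<Rightarrow> ('a \<Rightarrow> 'a \<Rightarrow> bool) \<Rightarrow> ('a \<Rightarrow> 'a \<Rightarrow> real) \<Rightarrow> ('a \<Rightarrow> real) \<Rightarrow> 'a \<Rightarrow> 'a \<Rightarrow> bool" where
  "R_S V E \<sigma> f x y \<longleftrightarrow> x \<in> nonzero_set V f \<and> y \<in> nonzero_set V f \<and>
     (x = y \<or> (\<exists>ys. S_walk E \<sigma> f ys \<and> hd ys = x \<and> last ys = y))"

definition R_W :: "'a set \<Rightarrow> ('a \<Rightarrow> 'a \<Rightarrow> bool) \<Rightarrow> ('a \<Rightarrow> 'a \<Rightarrow> real) \<Rightarrow> ('a \<Rightarrow> real) \<Rightarrow> 'a \<Rightarrow> 'a \<Rightarrow> bool" where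
  "R_W V E \<sigma> f x y \<longleftrightarrow> x \<in> nonzero_set V f \<and> y \<in> nonzero_set V f \<and>
     (x = y \<or> (\<exists>ys. W_walk E \<sigma> f ys \<and> hd ys = x \<and> last ys = y))"

definition strong_nodal_domain :: "'a set \<Rightarrow> ('a \<Rightarrow> 'a \<Rightarrow> bool) \<Rightarrow> ('a \<Rightarrow> 'a \<Rightarrow> real) \<Rightarrow> ('a \<Rightarrow> real) \<Rightarrow> 'a set \<Rightarrow> bool" where
  "strong_nodal_domain V E \<sigma> f D \<longleftrightarrow>
     (\<exists>x \<in> nonzero_set V f. D = {y. R_S V E \<sigma> f x y})"

definition weak_nodal_domain :: "'a set \<Rightarrow> ('a \<Rightarrow> 'a \<Rightarrow> bool) \<Rightarrow> ('a \<Rightarrow> 'a \<Rightarrow> real) \<Rightarrow> ('a \<Rightarrow> real) \<Rightarrow> 'a set \<Rightarrow> bool" where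
  "weak_nodal_domain V E \<sigma> f D \<longleftrightarrow>
     (\<exists>x \<in> nonzero_set V f. D = {y. R_W V E \<sigma> f x y} \<union>
        {z. \<exists>ys. W_walk E \<sigma> f ys \<and> hd ys \<in> {y. R_W V E \<sigma> f x y} \<and> last ys = z})"

definition connected_set :: "('a \<Rightarrow> 'a \<Rightarrow> bool) \<Rightarrow> 'a set \<Rightarrow> bool" where
  "connected_set E S \<longleftrightarrow> S \<noteq> {} \<and>
     (\<forall>x \<in> S. \<forall>y \<in> S. x = y \<or> (\<exists>ys. walk E ys \<and> hd ys = x \<and> last ys = y \<and> set ys \<subseteq> S))"

definition max_connected_in :: "('a \<Rightarrow> 'a \<Rightarrow> bool) \<Rightarrow> 'a set \<Rightarrow> 'a set \<Rightarrow> 'a set \<Rightarrow> bool" where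
  "max_connected_in E P Q S \<longleftrightarrow> S \<subseteq> P \<and> connected_set E S \<and> S \<inter> Q \<noteq> {} \<and>
     (\<forall>T. T \<subseteq> P \<and> connected_set E T \<and> T \<inter> Q \<noteq> {} \<and> S \<subseteq> T \<longrightarrow> T = S)"

definition unsigned_strong_nodal_domain :: "'a set \<Rightarrow> ('a \<Rightarrow> 'a \<Rightarrow> bool) \<Rightarrow> ('a \<Rightarrow> real) \<Rightarrow> 'a set \<Rightarrow> bool" where
  "unsigned_strong_nodal_domain V E g D \<longleftrightarrow>
     max_connected_in E {x \<in> V. g x > 0} {x \<in> V. g x > 0} D \<or>
     max_connected_in E {x \<in> V. g x < 0} {x \<in> V. g x < 0} D"

definition unsigned_weak_nodal_domain :: "'a set \<Rightarrow> ('a \<Rightarrow> 'a \<Rightarrow> bool) \<Rightarrow> ('a \<Rightarrow> real) \<Rightarrow> 'a set \<Rightarrow> bool" where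
  "unsigned_weak_nodal_domain V E g D \<longleftrightarrow>
     max_connected_in E {x \<in> V. g x \<ge> 0} {x \<in> V. g x \<noteq> 0} D \<or>
     max_connected_in E {x \<in> V. g x \<le> 0} {x \<in> V. g x \<noteq> 0} D"

end

theory Submission
  imports Defs
begin

lemma succ_nth: "successively P xs \<longleftrightarrow> (\<forall>i. Suc i < length xs \<longrightarrow> P (xs!i) (xs!Suc i))"
proof (induction xs rule: induct_list012)
  case (3 x y zs)
  show ?case
  proof
    assume "successively P (x # y # zs)"
    then have h: "P x y" "successively P (y#zs)" by auto
    show "\<forall>i. Suc i < length (x # y # zs) \<longrightarrow> P ((x # y # zs) ! i) ((x # y # zs) ! Suc i)"
    proof (intro allI impI)
      fix i assume "Suc i < length (x # y # zs)"
      then show "P ((x # y # zs) ! i) ((x # y # zs) ! Suc i)"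
      proof (cases i)
        case (Suc k)
        have "\<forall>i. Suc i < length (y # zs) \<longrightarrow> P ((y # zs) ! i) ((y # zs) ! Suc i)"
          using h(2) 3(2) by blast
        then show ?thesis using Suc \<open>Suc i < length (x # y # zs)\<close> by auto
      qed (use h in auto)
    qed
  next
    assume h: "\<forall>i. Suc i < length (x # y # zs) \<longrightarrow> P ((x # y # zs) ! i) ((x # y # zs) ! Suc i)"
    have "P x y" using h[rule_format, of 0] by simp
    moreover have "\<forall>i. Suc i < length (y # zs) \<longrightarrow> P ((y # zs) ! i) ((y # zs) ! Suc i)"
      using h by (metis Suc_less_eq length_Cons nth_Cons_Suc)
    ultimately show "successively P (x # y # zs)" using 3(2) by simp
  qed
qed auto

lemma walk_succ: "walk E ys \<longleftrightarrow> length ys \<ge> 2 \<and> successively E ys"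
  unfolding walk_def succ_nth by simp

definition Ep :: "('a \<Rightarrow> 'a \<Rightarrow> bool) \<Rightarrow> 'a set \<Rightarrow> ('a \<times> 'a) set" where
  "Ep E P = {(a,b). E a b \<and> a \<in> P \<and> b \<in> P}"

definition comp :: "('a \<Rightarrow> 'a \<Rightarrow> bool) \<Rightarrow> 'a set \<Rightarrow> 'a \<Rightarrow> 'a set" where
  "comp E P x = {y. (x,y) \<in> (Ep E P)\<^sup>*}"

lemma walk_to_rtrancl:
  "successively E ys \<Longrightarrow> set ys \<subseteq> P \<Longrightarrow> ys \<noteq> [] \<Longrightarrow> (hd ys, last ys) \<in> (Ep E P)\<^sup>*"
proof (induction ys rule: induct_list012)
  case (3 x y zs)
  then have "(y, last (y#zs)) \<in> (Ep E P)\<^sup>*" by auto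
  moreover have "(x,y) \<in> Ep E P" using 3 by (auto simp: Ep_def)
  ultimately show ?case by (simp add: converse_rtrancl_into_rtrancl)
qed auto

lemma rtrancl_to_walk:
  assumes "(a,b) \<in> (Ep E P)\<^sup>*" "a \<in> P"
  shows "a = b \<or> (\<exists>ys. walk E ys \<and> hd ys = a \<and> last ys = b \<and> set ys \<subseteq> P)"
  using assms
proof (induction rule: converse_rtrancl_induct)
  case base
  then show ?case by simp
next
  case (step a c)
  then have ac: "E a c" "a \<in> P" "c \<in> P" by (auto simp: Ep_def)
  from step(3)[OF ac(3)] show ?case
  proof
    assume "c = b"
    then have "walk E [a,b] \<and> hd [a,b] = a \<and> last [a,b] = b \<and> set [a,b] \<subseteq> P"
      using ac by (simp add: walk_succ)
    then show ?thesis by blast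
  next
    assume "\<exists>ys. walk E ys \<and> hd ys = c \<and> last ys = b \<and> set ys \<subseteq> P"
    then obtain ys where ys: "walk E ys" "hd ys = c" "last ys = b" "set ys \<subseteq> P" by blast
    then have "ys \<noteq> []" by (auto simp: walk_def)
    then have "walk E (a#ys) \<and> hd (a#ys) = a \<and> last (a#ys) = b \<and> set (a#ys) \<subseteq> P"
      using ys ac by (auto simp: walk_succ successively_Cons)
    then show ?thesis by blast
  qed
qed

lemma reach_iff:
  assumes "a \<in> P"
  shows "(a = b \<or> (\<exists>ys. walk E ys \<and> hd ys = a \<and> last ys = b \<and> set ys \<subseteq> P)) \<longleftrightarrow> (a,b) \<in> (Ep E P)\<^sup>*"
proof
  assume "a = b \<or> (\<exists>ys. walk E ys \<and> hd ys = a \<and> last ys = b \<and> set ys \<subseteq> P)"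
  then show "(a,b) \<in> (Ep E P)\<^sup>*"
  proof
    assume "\<exists>ys. walk E ys \<and> hd ys = a \<and> last ys = b \<and> set ys \<subseteq> P"
    then obtain ys where ys: "walk E ys" "hd ys = a" "last ys = b" "set ys \<subseteq> P" by blast
    then have "ys \<noteq> []" by (auto simp: walk_def)
    then show ?thesis using walk_to_rtrancl[of E ys P] ys by (auto simp: walk_succ)
  qed simp
next
  assume "(a,b) \<in> (Ep E P)\<^sup>*"
  then show "a = b \<or> (\<exists>ys. walk E ys \<and> hd ys = a \<and> last ys = b \<and> set ys \<subseteq> P)"
    using rtrancl_to_walk assms by metis
qed

lemma comp_sub: "x \<in> P \<Longrightarrow> comp E P x \<subseteq> P"
proof
  fix y assume "x \<in> P" "y \<in> comp E P x"
  then have "(x,y) \<in> (Ep E P)\<^sup>*" by (simp add: comp_def)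
  then show "y \<in> P" using \<open>x \<in> P\<close> by (induction rule: rtrancl_induct) (auto simp: Ep_def)
qed

lemma sym_Ep: "\<forall>x y. E x y \<longrightarrow> E y x \<Longrightarrow> (a,b) \<in> (Ep E P)\<^sup>* \<Longrightarrow> (b,a) \<in> (Ep E P)\<^sup>*"
proof -
  assume s: "\<forall>x y. E x y \<longrightarrow> E y x"
  have "sym (Ep E P)" using s by (auto simp: sym_def Ep_def)
  then have "sym ((Ep E P)\<^sup>*)" by (rule sym_rtrancl)
  then show "(a,b) \<in> (Ep E P)\<^sup>* \<Longrightarrow> (b,a) \<in> (Ep E P)\<^sup>*" by (auto dest: symD)
qed

lemma comp_closed:
  assumes "(a,b) \<in> (Ep E P)\<^sup>*" "(x,a) \<in> (Ep E P)\<^sup>*"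
  shows "(a,b) \<in> (Ep E (comp E P x))\<^sup>* \<and> (x,b) \<in> (Ep E P)\<^sup>*"
  using assms(1)
proof (induction rule: rtrancl_induct)
  case base then show ?case using assms(2) by simp
next
  case (step y z)
  then have xz: "(x,z) \<in> (Ep E P)\<^sup>*" by (meson rtrancl.rtrancl_into_rtrancl)
  have "(y,z) \<in> Ep E (comp E P x)" using step xz by (auto simp: Ep_def comp_def)
  then show ?case using step xz by (meson rtrancl.rtrancl_into_rtrancl)
qed

lemma comp_conn:
  assumes "x \<in> P" "\<forall>x y. E x y \<longrightarrow> E y x"
  shows "connected_set E (comp E P x)"
  unfolding connected_set_def
proof (intro conjI ballI)
  show "comp E P x \<noteq> {}" by (auto simp: comp_def)
next
  fix a b assume a: "a \<in> comp E P x" and b: "b \<in> comp E P x"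
  have xa: "(x,a) \<in> (Ep E P)\<^sup>*" and xb: "(x,b) \<in> (Ep E P)\<^sup>*" using a b by (auto simp: comp_def)
  have ab: "(a,b) \<in> (Ep E P)\<^sup>*" using rtrancl_trans[OF sym_Ep[OF assms(2) xa] xb] .
  have "(a,b) \<in> (Ep E (comp E P x))\<^sup>*" using conjunct1[OF comp_closed[OF ab xa]] .
  then show "a = b \<or> (\<exists>ys. walk E ys \<and> hd ys = a \<and> last ys = b \<and> set ys \<subseteq> comp E P x)"
    using reach_iff[OF a] by blast
qed

lemma Ep_mono: "T \<subseteq> P \<Longrightarrow> (Ep E T)\<^sup>* \<subseteq> (Ep E P)\<^sup>*"
  by (rule rtrancl_mono) (auto simp: Ep_def)

lemma conn_sub:
  assumes "connected_set E T" "T \<subseteq> P" "x \<in> T"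
  shows "T \<subseteq> comp E P x"
proof
  fix t assume "t \<in> T"
  then have "x = t \<or> (\<exists>ys. walk E ys \<and> hd ys = x \<and> last ys = t \<and> set ys \<subseteq> T)"
    using assms by (auto simp: connected_set_def)
  then have "(x,t) \<in> (Ep E T)\<^sup>*" using reach_iff[OF assms(3)] by blast
  then show "t \<in> comp E P x" using Ep_mono[OF assms(2)] by (auto simp: comp_def)
qed

lemma L1:
  assumes "x \<in> P" "x \<in> Q" "\<forall>x y. E x y \<longrightarrow> E y x"
  shows "max_connected_in E P Q (comp E P x)"
  unfolding max_connected_in_def
proof (intro conjI allI impI)
  show "comp E P x \<subseteq> P" using comp_sub assms by metis
  show "connected_set E (comp E P x)" using comp_conn assms by metis
  have "x \<in> comp E P x" by (simp add: comp_def)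
  then show "comp E P x \<inter> Q \<noteq> {}" using assms by blast
  fix T assume T: "T \<subseteq> P \<and> connected_set E T \<and> T \<inter> Q \<noteq> {} \<and> comp E P x \<subseteq> T"
  then have "x \<in> T" using \<open>x \<in> comp E P x\<close> by blast
  then have "T \<subseteq> comp E P x" using conn_sub T by metis
  then show "T = comp E P x" using T by blast
qed

lemma L2:
  assumes "max_connected_in E P Q S" "x \<in> S" "\<forall>x y. E x y \<longrightarrow> E y x"
  shows "S = comp E P x"
proof -
  have S: "S \<subseteq> P" "connected_set E S" "S \<inter> Q \<noteq> {}" using assms(1) by (auto simp: max_connected_in_def)
  have sub: "S \<subseteq> comp E P x" using conn_sub S assms(2) by metis
  have xP: "x \<in> P" using S assms(2) by blast
  have "comp E P x \<subseteq> P" "connected_set E (comp E P x)" "comp E P x \<inter> Q \<noteq> {}"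
    using comp_sub[OF xP] comp_conn[OF xP assms(3)] sub S by auto
  then show ?thesis using assms(1) sub unfolding max_connected_in_def by blast
qed


lemma pos3: "(a::real) * c > 0 \<Longrightarrow> a * b > 0 \<Longrightarrow> b * c > 0"
  by (auto simp: zero_less_mult_iff)

lemma pos3': "(a::real) * c > 0 \<Longrightarrow> b * c > 0 \<Longrightarrow> a * b > 0"
  by (auto simp: zero_less_mult_iff)

lemma s_pos: "(c::real) > 0 \<Longrightarrow> (a * c > 0 \<longleftrightarrow> a > 0)" by (simp add: zero_less_mult_iff)
lemma s_neg: "(c::real) < 0 \<Longrightarrow> (a * c > 0 \<longleftrightarrow> a < 0)" by (simp add: zero_less_mult_iff)
lemma s_pos': "(c::real) > 0 \<Longrightarrow> (a * c \<ge> 0 \<longleftrightarrow> a \<ge> 0)" by (simp add: zero_le_mult_iff)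
lemma s_neg': "(c::real) < 0 \<Longrightarrow> (a * c \<ge> 0 \<longleftrightarrow> a \<le> 0)" by (simp add: zero_le_mult_iff)
lemma s_same: "(w::real) * x > 0 \<Longrightarrow> (a * w \<ge> 0 \<longleftrightarrow> a * x \<ge> 0)"
  by (auto simp: zero_le_mult_iff zero_less_mult_iff)

context
  fixes V :: "'a set" and E :: "'a \<Rightarrow> 'a \<Rightarrow> bool" and \<sigma> :: "'a \<Rightarrow> 'a \<Rightarrow> real"
    and f :: "'a \<Rightarrow> real" and \<tau> :: "'a \<Rightarrow> real"
  assumes G: "simple_graph V E"
    and T1: "\<forall>x \<in> V. \<tau> x = 1 \<or> \<tau> x = -1"
    and T2: "\<forall>x y. E x y \<longrightarrow> \<tau> x * \<sigma> x y * \<tau> y = 1"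
begin

lemma symE: "\<forall>x y. E x y \<longrightarrow> E y x" using G by (simp add: simple_graph_def)

lemma EV: "E x y \<Longrightarrow> x \<in> V \<and> y \<in> V" using G by (simp add: simple_graph_def)

lemma tau_sq: "x \<in> V \<Longrightarrow> \<tau> x * \<tau> x = 1" using T1 by auto

lemma tau_nz: "x \<in> V \<Longrightarrow> \<tau> x \<noteq> 0" using T1 by auto

lemma sig_eq: "E x y \<Longrightarrow> \<sigma> x y = \<tau> x * \<tau> y"
proof -
  assume e: "E x y"
  then have "\<tau> x * \<sigma> x y * \<tau> y = 1" using T2 by blast
  then have "\<tau> x * (\<tau> x * \<sigma> x y * \<tau> y) * \<tau> y = \<tau> x * \<tau> y" by simp
  also have "\<tau> x * (\<tau> x * \<sigma> x y * \<tau> y) * \<tau> y = (\<tau> x * \<tau> x) * (\<tau> y * \<tau> y) * \<sigma> x y"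
    by (simp add: algebra_simps)
  finally show ?thesis using tau_sq EV[OF e] by simp
qed

lemma walk_in_V: "walk E ys \<Longrightarrow> set ys \<subseteq> V"
proof
  fix v assume w: "walk E ys" and "v \<in> set ys"
  then obtain i where i: "i < length ys" "ys ! i = v" by (auto simp: in_set_conv_nth)
  show "v \<in> V"
  proof (cases "i + 1 < length ys")
    case True
    then show ?thesis using w i EV by (auto simp: walk_def)
  next
    case False
    then have "i - 1 + 1 < length ys" "i - 1 + 1 = i" using w i by (auto simp: walk_def)
    then show ?thesis using w i EV unfolding walk_def by metis
  qed
qed

lemma prod_tel:
  assumes w: "walk E ys"
  shows "i \<le> j \<Longrightarrow> j < length ys \<Longrightarrow> (\<Prod>l\<in>{i..<j}. \<sigma> (ys!l) (ys!(l+1))) = \<tau>(ys!i) * \<tau>(ys!j)"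
proof (induction j)
  case 0
  then have "ys ! 0 \<in> V" using walk_in_V[OF w] by auto
  then show ?case using 0 tau_sq by simp
next
  case (Suc j)
  show ?case
  proof (cases "i = Suc j")
    case True
    then have "ys ! i \<in> V" using walk_in_V[OF w] Suc by auto
    then show ?thesis using True tau_sq by simp
  next
    case False
    then have ij: "i \<le> j" using Suc by simp
    have e: "E (ys!j) (ys!(j+1))" using w Suc by (auto simp: walk_def)
    have "(\<Prod>l\<in>{i..<Suc j}. \<sigma> (ys!l) (ys!(l+1))) = (\<Prod>l\<in>{i..<j}. \<sigma> (ys!l) (ys!(l+1))) * \<sigma> (ys!j) (ys!(j+1))"
      using ij by (simp add: prod.atLeastLessThan_Suc)
    also have "\<dots> = \<tau>(ys!i) * (\<tau>(ys!j) * \<tau>(ys!j)) * \<tau>(ys!(j+1))"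
      using Suc ij sig_eq[OF e] by simp
    also have "\<dots> = \<tau>(ys!i) * \<tau>(ys!Suc j)" using tau_sq EV[OF e] by simp
    finally show ?thesis .
  qed
qed

lemma S_walk_iff:
  assumes "x \<in> V" "\<tau> x * f x \<noteq> 0"
  shows "(S_walk E \<sigma> f ys \<and> hd ys = x) \<longleftrightarrow>
    (walk E ys \<and> hd ys = x \<and> set ys \<subseteq> {v \<in> V. (\<tau> v * f v) * (\<tau> x * f x) > 0})"
proof
  assume h: "S_walk E \<sigma> f ys \<and> hd ys = x"
  then have w: "walk E ys" by (simp add: S_walk_def)
  have ne: "ys \<noteq> []" using w by (auto simp: walk_def)
  have step: "(\<tau> (ys!j) * f (ys!j)) * (\<tau> (ys!(j+1)) * f (ys!(j+1))) > 0" if "j + 1 < length ys" for j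
  proof -
    have "f (ys ! j) * \<sigma> (ys ! j) (ys ! (j + 1)) * f (ys ! (j + 1)) > 0"
      using h that by (simp add: S_walk_def)
    moreover have "\<sigma> (ys ! j) (ys ! (j + 1)) = \<tau> (ys!j) * \<tau> (ys!(j+1))"
      using sig_eq w that by (simp add: walk_def)
    ultimately show ?thesis by (simp add: algebra_simps)
  qed
  have "j < length ys \<longrightarrow> (\<tau> (ys!j) * f (ys!j)) * (\<tau> x * f x) > 0" for j
  proof (induction j)
    case 0
    have sq: "0 < (\<tau> x * f x) * (\<tau> x * f x)" by (metis assms(2) not_real_square_gt_zero)
    then show ?case using h ne by (simp add: hd_conv_nth)
  next
    case (Suc j)
    then show ?case using step[of j] pos3 by auto
  qed
  then have "set ys \<subseteq> {v \<in> V. (\<tau> v * f v) * (\<tau> x * f x) > 0}"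
    using walk_in_V[OF w] by (auto simp: in_set_conv_nth)
  then show "walk E ys \<and> hd ys = x \<and> set ys \<subseteq> {v \<in> V. (\<tau> v * f v) * (\<tau> x * f x) > 0}"
    using w h by simp
next
  assume h: "walk E ys \<and> hd ys = x \<and> set ys \<subseteq> {v \<in> V. (\<tau> v * f v) * (\<tau> x * f x) > 0}"
  have "f (ys ! j) * \<sigma> (ys ! j) (ys ! (j + 1)) * f (ys ! (j + 1)) > 0" if "j + 1 < length ys" for j
  proof -
    have a: "(\<tau> (ys!j) * f (ys!j)) * (\<tau> x * f x) > 0" "(\<tau> (ys!(j+1)) * f (ys!(j+1))) * (\<tau> x * f x) > 0"
    proof -
      have "ys!j \<in> set ys" "ys!(j+1) \<in> set ys" using that by auto
      then show "(\<tau> (ys!j) * f (ys!j)) * (\<tau> x * f x) > 0" "(\<tau> (ys!(j+1)) * f (ys!(j+1))) * (\<tau> x * f x) > 0"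
        using h by auto
    qed
    have "(\<tau> (ys!j) * f (ys!j)) * (\<tau> (ys!(j+1)) * f (ys!(j+1))) > 0" using pos3'[OF a] .
    moreover have "\<sigma> (ys ! j) (ys ! (j + 1)) = \<tau> (ys!j) * \<tau> (ys!(j+1))"
      using sig_eq h that by (simp add: walk_def)
    ultimately show ?thesis by (simp add: algebra_simps)
  qed
  then show "S_walk E \<sigma> f ys \<and> hd ys = x" using h by (simp add: S_walk_def)
qed

lemma W_walk_cond:
  assumes w: "walk E ys" and ij: "i < j" "j < length ys"
  shows "f (ys ! i) * (\<Prod>l\<in>{i..<j}. \<sigma> (ys ! l) (ys ! (l + 1))) * f (ys ! j)
     = (\<tau> (ys!i) * f (ys!i)) * (\<tau> (ys!j) * f (ys!j))"
  using prod_tel[OF w, of i j] ij by (simp add: algebra_simps)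

lemma W1:
  assumes "\<tau> x * f x \<noteq> 0" "walk E ys" "set ys \<subseteq> {v \<in> V. (\<tau> v * f v) * (\<tau> x * f x) \<ge> 0}"
  shows "W_walk E \<sigma> f ys"
  unfolding W_walk_def
proof (intro conjI allI impI)
  show "walk E ys" by fact
  fix i j assume h: "i < j \<and> j < length ys \<and> f (ys ! i) \<noteq> 0 \<and> f (ys ! j) \<noteq> 0
        \<and> (\<forall>l. i < l \<and> l < j \<longrightarrow> f (ys ! l) = 0)"
  have iV: "ys!i \<in> V" "ys!j \<in> V" using h walk_in_V[OF assms(2)] by auto
  have a: "(\<tau> (ys!i) * f (ys!i)) * (\<tau> x * f x) \<ge> 0" "(\<tau> (ys!j) * f (ys!j)) * (\<tau> x * f x) \<ge> 0"
  proof -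
    have "ys!i \<in> set ys" "ys!j \<in> set ys" using h by auto
    then show "(\<tau> (ys!i) * f (ys!i)) * (\<tau> x * f x) \<ge> 0" "(\<tau> (ys!j) * f (ys!j)) * (\<tau> x * f x) \<ge> 0"
      using assms(3) by auto
  qed
  have b: "\<tau> (ys!i) * f (ys!i) \<noteq> 0" "\<tau> (ys!j) * f (ys!j) \<noteq> 0" using h tau_nz iV by auto
  have "(\<tau> (ys!i) * f (ys!i)) * (\<tau> x * f x) > 0" "(\<tau> (ys!j) * f (ys!j)) * (\<tau> x * f x) > 0"
    using a b assms(1) by (simp_all add: order_le_less)
  then have "(\<tau> (ys!i) * f (ys!i)) * (\<tau> (ys!j) * f (ys!j)) > 0" by (rule pos3')
  then show "f (ys ! i) * (\<Prod>l\<in>{i..<j}. \<sigma> (ys ! l) (ys ! (l + 1))) * f (ys ! j) > 0"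
  proof -
    have ij: "i < j" "j < length ys" using h by auto
    show ?thesis unfolding W_walk_cond[OF assms(2) ij] by fact
  qed
qed

lemma W2:
  assumes W: "W_walk E \<sigma> f ys" and hw: "hd ys = w" and gw: "\<tau> w * f w \<noteq> 0"
  shows "set ys \<subseteq> {v \<in> V. (\<tau> v * f v) * (\<tau> w * f w) \<ge> 0}"
proof -
  have w: "walk E ys" using W by (simp add: W_walk_def)
  have ne: "ys \<noteq> []" using w by (auto simp: walk_def)
  have V: "set ys \<subseteq> V" using walk_in_V[OF w] .
  have "k < length ys \<longrightarrow> (\<tau> (ys!k) * f (ys!k)) * (\<tau> w * f w) \<ge> 0" for k
  proof (induction k rule: less_induct)
    case (less k)
    show ?case
    proof (intro impI)
      assume kl: "k < length ys"
      show "(\<tau> (ys!k) * f (ys!k)) * (\<tau> w * f w) \<ge> 0"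
      proof (cases "k = 0 \<or> \<tau> (ys!k) * f (ys!k) = 0")
        case True
        then show ?thesis using hw ne by (auto simp: hd_conv_nth)
      next
        case False
        then have k0: "k > 0" and gk: "\<tau> (ys!k) * f (ys!k) \<noteq> 0" by auto
        define P where "P = (\<lambda>l. l < k \<and> \<tau> (ys!l) * f (ys!l) \<noteq> 0)"
        have P0: "P 0" using k0 hw ne gw by (simp add: P_def hd_conv_nth)
        have bnd: "\<forall>y. P y \<longrightarrow> y \<le> k" by (simp add: P_def)
        define i where "i = Greatest P"
        have Pi: "P i" unfolding i_def using GreatestI_nat[of P 0 k] P0 bnd by blast
        have gr: "\<And>l. P l \<Longrightarrow> l \<le> i" unfolding i_def using Greatest_le_nat bnd by blast
        have ik: "i < k" and gi: "\<tau> (ys!i) * f (ys!i) \<noteq> 0" using Pi by (auto simp: P_def)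
        have iV: "ys!i \<in> V" "ys!k \<in> V" using V ik kl by auto
        have "(\<tau> (ys!i) * f (ys!i)) * (\<tau> w * f w) \<ge> 0" using less ik kl by auto
        then have pi: "(\<tau> (ys!i) * f (ys!i)) * (\<tau> w * f w) > 0" using gi gw by (simp add: order_le_less)
        have zeros: "\<forall>l. i < l \<and> l < k \<longrightarrow> f (ys ! l) = 0"
        proof (intro allI impI)
          fix l assume l: "i < l \<and> l < k"
          then have "\<not> P l" using gr by fastforce
          moreover have "ys ! l \<in> V" using V l kl by auto
          ultimately show "f (ys ! l) = 0" using l tau_nz by (auto simp: P_def)
        qed
        have "f (ys ! i) \<noteq> 0" "f (ys ! k) \<noteq> 0" using gi gk by auto
        then have "i < k \<and> k < length ys \<and> f (ys ! i) \<noteq> 0 \<and> f (ys ! k) \<noteq> 0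
            \<and> (\<forall>l. i < l \<and> l < k \<longrightarrow> f (ys ! l) = 0)" using zeros ik kl by simp
        then have "f (ys ! i) * (\<Prod>l\<in>{i..<k}. \<sigma> (ys ! l) (ys ! (l + 1))) * f (ys ! k) > 0"
          using W[unfolded W_walk_def, THEN conjunct2, rule_format] by blast
        then have "(\<tau> (ys!i) * f (ys!i)) * (\<tau> (ys!k) * f (ys!k)) > 0"
          unfolding W_walk_cond[OF w ik kl] .
        then have "(\<tau> (ys!k) * f (ys!k)) * (\<tau> w * f w) > 0" using pi pos3 by blast
        then show ?thesis by simp
      qed
    qed
  qed
  then show ?thesis using V by (auto simp: in_set_conv_nth)
qed

lemma RS_eq:
  assumes xV: "x \<in> V" and gx: "\<tau> x * f x \<noteq> 0"
  shows "{y. R_S V E \<sigma> f x y} = comp E {v \<in> V. (\<tau> v * f v) * (\<tau> x * f x) > 0} x"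
    (is "_ = comp E ?P x")
proof -
  have sq: "0 < (\<tau> x * f x) * (\<tau> x * f x)" by (metis gx not_real_square_gt_zero)
  have xP: "x \<in> ?P" using xV sq by blast
  have xnz: "x \<in> nonzero_set V f" using xV gx by (simp add: nonzero_set_def)
  show ?thesis
  proof (intro set_eqI iffI)
    fix y assume "y \<in> {y. R_S V E \<sigma> f x y}"
    then have "x = y \<or> (\<exists>ys. S_walk E \<sigma> f ys \<and> hd ys = x \<and> last ys = y)" by (simp add: R_S_def)
    then have "x = y \<or> (\<exists>ys. walk E ys \<and> hd ys = x \<and> last ys = y \<and> set ys \<subseteq> ?P)"
      using S_walk_iff[OF xV gx] by blast
    then show "y \<in> comp E ?P x" using reach_iff[OF xP] by (simp add: comp_def)
  next
    fix y assume y: "y \<in> comp E ?P x"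
    then have "y \<in> ?P" using comp_sub[OF xP] by blast
    then have ynz: "y \<in> nonzero_set V f" by (auto simp: nonzero_set_def)
    have "x = y \<or> (\<exists>ys. walk E ys \<and> hd ys = x \<and> last ys = y \<and> set ys \<subseteq> ?P)"
      using y reach_iff[OF xP] by (simp add: comp_def)
    then have "x = y \<or> (\<exists>ys. S_walk E \<sigma> f ys \<and> hd ys = x \<and> last ys = y)"
      using S_walk_iff[OF xV gx] by blast
    then show "y \<in> {y. R_S V E \<sigma> f x y}" using xnz ynz by (simp add: R_S_def)
  qed
qed

lemma Q_eq:
  assumes "(\<tau> w * f w) * (\<tau> x * f x) > 0"
  shows "{v \<in> V. (\<tau> v * f v) * (\<tau> w * f w) \<ge> 0} = {v \<in> V. (\<tau> v * f v) * (\<tau> x * f x) \<ge> 0}"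
  using s_same[OF assms] by blast

lemma RW_eq:
  assumes xV: "x \<in> V" and gx: "\<tau> x * f x \<noteq> 0"
  shows "{y. R_W V E \<sigma> f x y} = {y \<in> comp E {v \<in> V. (\<tau> v * f v) * (\<tau> x * f x) \<ge> 0} x. \<tau> y * f y \<noteq> 0}"
    (is "_ = {y \<in> comp E ?Q x. _}")
proof -
  have xQ: "x \<in> ?Q" using xV gx by simp
  have xnz: "x \<in> nonzero_set V f" using xV gx by (simp add: nonzero_set_def)
  show ?thesis
  proof (intro set_eqI iffI)
    fix y assume "y \<in> {y. R_W V E \<sigma> f x y}"
    then have R: "x = y \<or> (\<exists>ys. W_walk E \<sigma> f ys \<and> hd ys = x \<and> last ys = y)" and
      ynz: "y \<in> nonzero_set V f" by (simp_all add: R_W_def)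
    have "x = y \<or> (\<exists>ys. walk E ys \<and> hd ys = x \<and> last ys = y \<and> set ys \<subseteq> ?Q)"
    proof (cases "x = y")
      case False
      then obtain ys where ys: "W_walk E \<sigma> f ys" "hd ys = x" "last ys = y" using R by blast
      have "set ys \<subseteq> ?Q" using W2[OF ys(1) ys(2) gx] .
      moreover have "walk E ys" using ys(1) by (simp add: W_walk_def)
      ultimately show ?thesis using ys by blast
    qed simp
    then have "y \<in> comp E ?Q x" using reach_iff[OF xQ] by (simp add: comp_def)
    then show "y \<in> {y \<in> comp E ?Q x. \<tau> y * f y \<noteq> 0}" using ynz tau_nz by (auto simp: nonzero_set_def)
  next
    fix y assume y: "y \<in> {y \<in> comp E ?Q x. \<tau> y * f y \<noteq> 0}"
    then have "y \<in> ?Q" using comp_sub[OF xQ] by blast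
    then have ynz: "y \<in> nonzero_set V f" using y by (auto simp: nonzero_set_def)
    have "x = y \<or> (\<exists>ys. walk E ys \<and> hd ys = x \<and> last ys = y \<and> set ys \<subseteq> ?Q)"
      using y reach_iff[OF xQ] by (simp add: comp_def)
    then have "x = y \<or> (\<exists>ys. W_walk E \<sigma> f ys \<and> hd ys = x \<and> last ys = y)"
      using W1[OF gx] by blast
    then show "y \<in> {y. R_W V E \<sigma> f x y}" using xnz ynz by (simp add: R_W_def)
  qed
qed

lemma WD_eq:
  assumes xV: "x \<in> V" and gx: "\<tau> x * f x \<noteq> 0"
  shows "{y. R_W V E \<sigma> f x y} \<union>
        {z. \<exists>ys. W_walk E \<sigma> f ys \<and> hd ys \<in> {y. R_W V E \<sigma> f x y} \<and> last ys = z}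
      = comp E {v \<in> V. (\<tau> v * f v) * (\<tau> x * f x) \<ge> 0} x"
    (is "?W \<union> ?Z = comp E ?Q x")
proof -
  have xQ: "x \<in> ?Q" using xV gx by simp
  have W: "?W = {y \<in> comp E ?Q x. \<tau> y * f y \<noteq> 0}" by (rule RW_eq[OF xV gx])
  have "?Z \<subseteq> comp E ?Q x"
  proof
    fix z assume "z \<in> ?Z"
    then obtain ys where ys: "W_walk E \<sigma> f ys" "hd ys \<in> ?W" "last ys = z" by blast
    define w where "w = hd ys"
    have wc: "w \<in> comp E ?Q x" and gw: "\<tau> w * f w \<noteq> 0" using ys(2) W by (auto simp: w_def)
    have "w \<in> ?Q" using wc comp_sub[OF xQ] by blast
    then have wx: "(\<tau> w * f w) * (\<tau> x * f x) > 0" using gw gx by (simp add: order_le_less)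
    have s: "set ys \<subseteq> {v \<in> V. (\<tau> v * f v) * (\<tau> w * f w) \<ge> 0}"
      by (rule W2[OF ys(1) _ gw]) (simp add: w_def)
    have "set ys \<subseteq> ?Q" using s Q_eq[OF wx] by simp
    moreover have w: "walk E ys" using ys(1) by (simp add: W_walk_def)
    moreover have "ys \<noteq> []" using w by (auto simp: walk_def)
    ultimately have "(w, z) \<in> (Ep E ?Q)\<^sup>*" using walk_to_rtrancl[of E ys ?Q] ys(3)
      by (simp add: walk_succ w_def)
    then show "z \<in> comp E ?Q x" using wc by (simp add: comp_def)
  qed
  moreover have "comp E ?Q x \<subseteq> ?W \<union> ?Z"
  proof
    fix z assume z: "z \<in> comp E ?Q x"
    have xW: "x \<in> ?W" using W xV gx by (simp add: comp_def)
    have "x = z \<or> (\<exists>ys. walk E ys \<and> hd ys = x \<and> last ys = z \<and> set ys \<subseteq> ?Q)"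
      using z reach_iff[OF xQ] by (simp add: comp_def)
    then show "z \<in> ?W \<union> ?Z"
    proof
      assume "x = z" then show ?thesis using xW by blast
    next
      assume "\<exists>ys. walk E ys \<and> hd ys = x \<and> last ys = z \<and> set ys \<subseteq> ?Q"
      then obtain ys where "walk E ys" "hd ys = x" "last ys = z" "set ys \<subseteq> ?Q" by blast
      then have "W_walk E \<sigma> f ys" "hd ys \<in> ?W" "last ys = z" using W1[OF gx] xW by auto
      then show ?thesis by blast
    qed
  qed
  moreover have "?W \<subseteq> comp E ?Q x" using W by blast
  ultimately show ?thesis by blast
qed

end

theorem corollary3p3:
  fixes V :: "'a set" and E :: "'a \<Rightarrow> 'a \<Rightarrow> bool" and \<sigma> :: "'a \<Rightarrow> 'a \<Rightarrow> real"
    and f :: "'a \<Rightarrow> real" and \<tau> :: "'a \<Rightarrow> real" and D :: "'a set"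
  assumes "simple_graph V E"
    and "signature E \<sigma>"
    and "balanced E \<sigma>"
    and "\<exists>x \<in> V. f x \<noteq> 0"
    and "\<forall>x \<in> V. \<tau> x = 1 \<or> \<tau> x = -1"
    and "\<forall>x y. E x y \<longrightarrow> \<tau> x * \<sigma> x y * \<tau> y = 1"
  shows "(strong_nodal_domain V E \<sigma> f D \<longleftrightarrow>
            unsigned_strong_nodal_domain V E (\<lambda>x. \<tau> x * f x) D)
       \<and> (weak_nodal_domain V E \<sigma> f D \<longleftrightarrow>
            unsigned_weak_nodal_domain V E (\<lambda>x. \<tau> x * f x) D)"
proof -
  note G = assms(1) and T1 = assms(5) and T2 = assms(6)
  have sE: "\<forall>x y. E x y \<longrightarrow> E y x" by (rule symE[OF G T1 T2])
  have nz: "x \<in> nonzero_set V f \<longleftrightarrow> x \<in> V \<and> \<tau> x * f x \<noteq> 0" for x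
    using T1 by (auto simp: nonzero_set_def)
  define Pp where "Pp = {v \<in> V. \<tau> v * f v > 0}"
  define Pn where "Pn = {v \<in> V. \<tau> v * f v < 0}"
  define Qp where "Qp = {v \<in> V. \<tau> v * f v \<ge> 0}"
  define Qn where "Qn = {v \<in> V. \<tau> v * f v \<le> 0}"
  define NZ where "NZ = {v \<in> V. \<tau> v * f v \<noteq> 0}"
  have Pp: "{v \<in> V. (\<tau> v * f v) * (\<tau> x * f x) > 0} = Pp" if "\<tau> x * f x > 0" for x
    by (simp add: Pp_def s_pos[OF that])
  have Pn: "{v \<in> V. (\<tau> v * f v) * (\<tau> x * f x) > 0} = Pn" if "\<tau> x * f x < 0" for x
    by (simp add: Pn_def s_neg[OF that])
  have Qp: "{v \<in> V. (\<tau> v * f v) * (\<tau> x * f x) \<ge> 0} = Qp" if "\<tau> x * f x > 0" for x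
    by (simp add: Qp_def s_pos'[OF that])
  have Qn: "{v \<in> V. (\<tau> v * f v) * (\<tau> x * f x) \<ge> 0} = Qn" if "\<tau> x * f x < 0" for x
    by (simp add: Qn_def s_neg'[OF that])
  have US: "unsigned_strong_nodal_domain V E (\<lambda>x. \<tau> x * f x) D \<longleftrightarrow>
      max_connected_in E Pp Pp D \<or> max_connected_in E Pn Pn D"
    by (simp add: unsigned_strong_nodal_domain_def Pp_def Pn_def)
  have UW: "unsigned_weak_nodal_domain V E (\<lambda>x. \<tau> x * f x) D \<longleftrightarrow>
      max_connected_in E Qp NZ D \<or> max_connected_in E Qn NZ D"
    by (simp add: unsigned_weak_nodal_domain_def Qp_def Qn_def NZ_def)
  have strong: "strong_nodal_domain V E \<sigma> f D \<longleftrightarrow> max_connected_in E Pp Pp D \<or> max_connected_in E Pn Pn D"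
  proof
    assume "strong_nodal_domain V E \<sigma> f D"
    then obtain x where x: "x \<in> V" "\<tau> x * f x \<noteq> 0" "D = {y. R_S V E \<sigma> f x y}"
      by (auto simp: strong_nodal_domain_def nz)
    have D: "D = comp E {v \<in> V. (\<tau> v * f v) * (\<tau> x * f x) > 0} x"
      using RS_eq[where V=V and E=E and \<sigma>=\<sigma> and f=f and \<tau>=\<tau> and x=x, OF G T1 T2 x(1,2)] x(3) by simp
    show "max_connected_in E Pp Pp D \<or> max_connected_in E Pn Pn D"
    proof (cases "\<tau> x * f x > 0")
      case True
      then have "x \<in> Pp" using x by (simp add: Pp_def)
      then show ?thesis using L1[OF _ _ sE] D Pp[OF True] by metis
    next
      case False
      have F: "\<tau> x * f x < 0" using x(2) False by linarith
      then have "x \<in> Pn" using x by (simp add: Pn_def)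
      then show ?thesis using L1[OF _ _ sE] D Pn[OF F] by metis
    qed
  next
    assume "max_connected_in E Pp Pp D \<or> max_connected_in E Pn Pn D"
    then show "strong_nodal_domain V E \<sigma> f D"
    proof
      assume M: "max_connected_in E Pp Pp D"
      then obtain x where "x \<in> D" "x \<in> Pp" by (auto simp: max_connected_in_def)
      then have x: "x \<in> V" "\<tau> x * f x > 0" by (auto simp: Pp_def)
      have ne: "\<tau> x * f x \<noteq> 0" using x(2) by linarith
      have "D = comp E Pp x" using L2[OF M \<open>x \<in> D\<close> sE] .
      also have "\<dots> = {y. R_S V E \<sigma> f x y}" using RS_eq[where V=V and E=E and \<sigma>=\<sigma> and f=f and \<tau>=\<tau> and x=x, OF G T1 T2 x(1) ne] x(2) Pp[OF x(2)] by simp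
      finally show ?thesis unfolding strong_nodal_domain_def using x(1) ne nz by blast
    next
      assume M: "max_connected_in E Pn Pn D"
      then obtain x where "x \<in> D" "x \<in> Pn" by (auto simp: max_connected_in_def)
      then have x: "x \<in> V" "\<tau> x * f x < 0" by (auto simp: Pn_def)
      have ne: "\<tau> x * f x \<noteq> 0" using x(2) by linarith
      have "D = comp E Pn x" using L2[OF M \<open>x \<in> D\<close> sE] .
      also have "\<dots> = {y. R_S V E \<sigma> f x y}" using RS_eq[where V=V and E=E and \<sigma>=\<sigma> and f=f and \<tau>=\<tau> and x=x, OF G T1 T2 x(1) ne] x(2) Pn[OF x(2)] by simp
      finally show ?thesis unfolding strong_nodal_domain_def using x(1) ne nz by blast
    qed
  qed
  have weak: "weak_nodal_domain V E \<sigma> f D \<longleftrightarrow> max_connected_in E Qp NZ D \<or> max_connected_in E Qn NZ D"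
  proof
    assume "weak_nodal_domain V E \<sigma> f D"
    then obtain x where x: "x \<in> V" "\<tau> x * f x \<noteq> 0" "D = {y. R_W V E \<sigma> f x y} \<union>
        {z. \<exists>ys. W_walk E \<sigma> f ys \<and> hd ys \<in> {y. R_W V E \<sigma> f x y} \<and> last ys = z}"
      by (auto simp: weak_nodal_domain_def nz)
    have D: "D = comp E {v \<in> V. (\<tau> v * f v) * (\<tau> x * f x) \<ge> 0} x"
      using WD_eq[where V=V and E=E and \<sigma>=\<sigma> and f=f and \<tau>=\<tau> and x=x, OF G T1 T2 x(1,2)] x(3) by simp
    have xNZ: "x \<in> NZ" using x by (simp add: NZ_def)
    show "max_connected_in E Qp NZ D \<or> max_connected_in E Qn NZ D"
    proof (cases "\<tau> x * f x > 0")
      case True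
      then have "x \<in> Qp" using x by (simp add: Qp_def)
      then show ?thesis using L1[OF _ xNZ sE] D Qp[OF True] by metis
    next
      case False
      have F: "\<tau> x * f x < 0" using x(2) False by linarith
      then have "x \<in> Qn" using x by (simp add: Qn_def)
      then show ?thesis using L1[OF _ xNZ sE] D Qn[OF F] by metis
    qed
  next
    assume "max_connected_in E Qp NZ D \<or> max_connected_in E Qn NZ D"
    then show "weak_nodal_domain V E \<sigma> f D"
    proof
      assume M: "max_connected_in E Qp NZ D"
      then obtain x where "x \<in> D" "x \<in> NZ" "D \<subseteq> Qp" by (auto simp: max_connected_in_def)
      then have xV: "x \<in> V" and a: "\<tau> x * f x \<ge> 0" and b: "\<tau> x * f x \<noteq> 0"
        unfolding Qp_def NZ_def by blast+
      then have x: "x \<in> V" "\<tau> x * f x > 0" by linarith+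
      have ne: "\<tau> x * f x \<noteq> 0" using x(2) by linarith
      have "D = comp E Qp x" using L2[OF M \<open>x \<in> D\<close> sE] .
      also have "\<dots> = {y. R_W V E \<sigma> f x y} \<union>
        {z. \<exists>ys. W_walk E \<sigma> f ys \<and> hd ys \<in> {y. R_W V E \<sigma> f x y} \<and> last ys = z}"
        using WD_eq[where V=V and E=E and \<sigma>=\<sigma> and f=f and \<tau>=\<tau> and x=x, OF G T1 T2 x(1) ne] x(2) Qp[OF x(2)] by simp
      finally show ?thesis unfolding weak_nodal_domain_def using x(1) ne nz by blast
    next
      assume M: "max_connected_in E Qn NZ D"
      then obtain x where "x \<in> D" "x \<in> NZ" "D \<subseteq> Qn" by (auto simp: max_connected_in_def)
      then have xV: "x \<in> V" and a: "\<tau> x * f x \<le> 0" and b: "\<tau> x * f x \<noteq> 0"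
        unfolding Qn_def NZ_def by blast+
      then have x: "x \<in> V" "\<tau> x * f x < 0" by linarith+
      have ne: "\<tau> x * f x \<noteq> 0" using x(2) by linarith
      have "D = comp E Qn x" using L2[OF M \<open>x \<in> D\<close> sE] .
      also have "\<dots> = {y. R_W V E \<sigma> f x y} \<union>
        {z. \<exists>ys. W_walk E \<sigma> f ys \<and> hd ys \<in> {y. R_W V E \<sigma> f x y} \<and> last ys = z}"
        using WD_eq[where V=V and E=E and \<sigma>=\<sigma> and f=f and \<tau>=\<tau> and x=x, OF G T1 T2 x(1) ne] x(2) Qn[OF x(2)] by simp
      finally show ?thesis unfolding weak_nodal_domain_def using x(1) ne nz by blast
    qed
  qed
  show ?thesis using strong weak US UW by simp
qed

end
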